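(* For an undirected graph $G=(V,E)$ without self-loops and $\epsilon>0$, let $W_{G,\epsilon}$ be the symmetric matrix with $[W_{G,\epsilon}]_{ij}=\epsilon$ if $\{i,j\}\in E$, $0$ for distinct non-adjacent $i,j$, and diagonal entries chosen so that each row sums to $1$. For $n\ge1$ let $G_n'$ be the graph on the $2n$ vertices $u_1,\dots,u_n,v_1,\dots,v_n$ consisting of a complete graph on $\{u_1,\dots,u_n\}$, a complete graph on $\{v_1,\dots,v_n\}$, and the edges $\{u_i,v_i\}$, $i=1,\dots,n$. Consider the scalar ($d=1$) iteration $$x(t+1)=W_{G_n',\epsilon}\,P_\Omega\big[x(t)-\alpha(t)g(t)\big],\quad t\ge1,$$ with $\alpha(t)=1/\sqrt t$, $\Omega=[-a,a]$, initial condition $x_i(1)=0$ for all nodes, local functions $f_{u_i}(x)=\gamma|x|$ and $f_{v_i}(x)=\frac12|x-1|$, and $g_i(t)$ a subgradient of $f_i$ at $x_i(t)$. Then there exist constants $\gamma>1$ and $a>0$ (one may take $\gamma=3$, $a=6$), independent of $n$ and $\epsilon$, such that for every $n\ge4$ and every $\epsilon\in(0,1/n]$ there is a choice of subgradients $g_i(t)$ for all $i,t$ for which the resulting trajectory satisfies: (i) $x_{u_i}(t)=x^*=0$ for all $i$ and all $t$, where $x^*=0$ is the minimizer of $F=\frac{1}{2n}\sum_i f_i$ over $\Omega$; (ii) $x_{v_i}(t)-x^*$ is nonnegative and independent of $i$ for every $t$; and (iii) there exists $t_1$ such that for all $t\ge t_1$ and all $i$, $x_{v_i}(t)-x^*\ge\frac{\epsilon^{-1}}{16\sqrt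 t}$.
   Context: $P_\Omega$ denotes projection onto $\Omega$ applied to each entry. Since the maximum degree of $G_n'$ is $n$, $W_{G_n',\epsilon}$ is nonnegative and stochastic exactly when $\epsilon\le 1/n$; its diagonal entries are $1-n\epsilon$. *)

theory Defs
  imports Complex_Main
begin

definition W_mat :: "'v set \<Rightarrow> ('v \<Rightarrow> 'v \<Rightarrow> bool) \<Rightarrow> real \<Rightarrow> 'v \<Rightarrow> 'v \<Rightarrow> real" where
  "W_mat V E eps i j =
     (if i = j then 1 - (\<Sum>k\<in>V - {i}. if E i k then eps else 0)
      else if E i j then eps else 0)"

text \<open>The graph G_n' on vertices 0..2n-1: u_i = i and v_i = n + i for i < n.\<close>
definition Gn_verts :: "nat \<Rightarrow> nat set" where
  "Gn_verts n = {..<2*n}"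

definition Gn_edge :: "nat \<Rightarrow> nat \<Rightarrow> nat \<Rightarrow> bool" where
  "Gn_edge n i j \<longleftrightarrow> i \<noteq> j \<and> i < 2*n \<and> j < 2*n \<and>
     ((i < n \<and> j < n) \<or> (n \<le> i \<and> n \<le> j) \<or> j = i + n \<or> i = j + n)"

definition proj_box :: "real \<Rightarrow> real \<Rightarrow> real" where
  "proj_box a y = max (-a) (min a y)"

definition loc_f :: "nat \<Rightarrow> real \<Rightarrow> nat \<Rightarrow> real \<Rightarrow> real" where
  "loc_f n \<gamma> i x = (if i < n then \<gamma> * \<bar>x\<bar> else (1/2) * \<bar>x - 1\<bar>)"

definition glob_F :: "nat \<Rightarrow> real \<Rightarrow> real \<Rightarrow> real" where
  "glob_F n \<gamma> x = (1 / (2 * real n)) * (\<Sum>i\<in>Gn_verts n. loc_f n \<gamma> i x)"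

definition is_subgradient :: "(real \<Rightarrow> real) \<Rightarrow> real \<Rightarrow> real \<Rightarrow> bool" where
  "is_subgradient f x g \<longleftrightarrow> (\<forall>y. f y \<ge> f x + g * (y - x))"

definition is_trajectory ::
  "nat \<Rightarrow> real \<Rightarrow> real \<Rightarrow> real \<Rightarrow> (nat \<Rightarrow> nat \<Rightarrow> real) \<Rightarrow> (nat \<Rightarrow> nat \<Rightarrow> real) \<Rightarrow> bool" where
  "is_trajectory n \<gamma> a eps g x \<longleftrightarrow>
     (\<forall>i\<in>Gn_verts n. x 1 i = 0) \<and>
     (\<forall>t\<ge>1. \<forall>i\<in>Gn_verts n. is_subgradient (loc_f n \<gamma> i) (x t i) (g t i)) \<and>
     (\<forall>t\<ge>1. \<forall>i\<in>Gn_verts n.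
        x (t + 1) i = (\<Sum>j\<in>Gn_verts n. W_mat (Gn_verts n) (Gn_edge n) eps i j *
                          proj_box a (x t j - (1 / sqrt (real t)) * g t j)))"

end

theory Submission
  imports Defs
begin

definition rho :: "real \<Rightarrow> real" where "rho e = (1 - 2*e) / (1 - e)"
definition hh :: "nat \<Rightarrow> real" where "hh t = 1/(2*sqrt (real t))"
definition zz :: "nat \<Rightarrow> real \<Rightarrow> real" where
  "zz t y = (if y < 1 then y + hh t else y - hh t)"
primrec ys :: "real \<Rightarrow> nat \<Rightarrow> real" where
  "ys e 0 = 0"
| "ys e (Suc t) = (if t = 0 then 0 else rho e * zz t (ys e t))"

lemma ys_step: "t \<ge> 1 \<Longrightarrow> ys e (t+1) = rho e * zz t (ys e t)" by simp

lemma rho_bounds: assumes "0 < e" "e \<le> 1/4" shows "2/3 \<le> rho e" "rho e < 1" "0 < rho e"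
  using assms by (auto simp: rho_def field_simps)

lemma hh_bnd: "t \<ge> 1 \<Longrightarrow> 0 < hh t \<and> hh t \<le> 1/2"
  unfolding hh_def by (simp add: field_simps)

lemma zz_bnd: "t \<ge> 1 \<Longrightarrow> 0 \<le> y \<Longrightarrow> y \<le> 3/2 \<Longrightarrow> 0 \<le> zz t y \<and> zz t y \<le> 3/2"
  using hh_bnd[of t] unfolding zz_def by auto

lemma ys_bnd: assumes "0 < e" "e \<le> 1/4" "t \<ge> 1" shows "0 \<le> ys e t \<and> ys e t \<le> 3/2"
  using assms(3)
proof (induction t rule: dec_induct)
  case base then show ?case by simp
next
  case (step t)
  have "0 \<le> zz t (ys e t) \<and> zz t (ys e t) \<le> 3/2"
    using step zz_bnd by auto
  moreover have "rho e * zz t (ys e t) \<le> 1 * zz t (ys e t)"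
    using calculation rho_bounds[OF assms(1,2)] by (intro mult_right_mono) auto
  ultimately show ?case using rho_bounds[OF assms(1,2)] step.hyps by simp
qed

lemma key_te: fixes e t :: real assumes "0 < e" "e \<le> 1/4" "(t+1)*e^2 > 16/9" shows "t*e \<ge> 6"
proof -
  have "(t+1)*e * e > 16/9" using assms(3) by (simp add: power2_eq_square mult.assoc)
  hence "(t+1)*e > 16/9 / e" using assms(1) by (simp add: field_simps)
  moreover have "16/9/e \<ge> 64/9" using assms(1,2) by (simp add: field_simps)
  ultimately have "(t+1)*e > 64/9" by linarith
  thus ?thesis using assms(2) by (simp add: algebra_simps)
qed

lemma key_sq: fixes e t :: real assumes "0 < e" "e \<le> 1/4" "t*e \<ge> 6" "t \<ge> 0"
  shows "((1-2*e)*(2+e/2))^2 * (t+1) \<le> (2*(1-e))^2 * t"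
proof -
  define A where "A = (1-2*e)*(2+e/2)"
  define B where "B = 2*(1-e)"
  have ee: "e*e \<le> 1/4" using assms(1,2) mult_mono[of e "1/4" e "1"] by simp
  have A0: "0 \<le> A" "A \<le> 2" using ee assms(1,2) unfolding A_def by (auto simp: algebra_simps power2_eq_square)
  have BA: "B - A \<ge> 3/2*e" unfolding A_def B_def using assms(1) by (simp add: algebra_simps power2_eq_square)
  have BpA: "B + A \<ge> 3/2" using A0 assms(2) unfolding B_def by (simp add: right_diff_distrib)
  have "B^2 - A^2 = (B-A)*(B+A)" by (simp add: algebra_simps power2_eq_square)
  also have "\<dots> \<ge> (3/2*e)*(3/2)" using BA BpA assms(1) by (intro mult_mono) auto
  finally have "(B^2 - A^2)*t \<ge> (9/4*e)*t" using assms(4) by (intro mult_right_mono) auto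
  moreover have "(9/4*e)*t \<ge> 27/2" using assms(3) by (simp add: algebra_simps)
  moreover have "A^2 \<le> 4" using power_mono[OF A0(2) A0(1), of 2] by simp
  ultimately have "A^2 \<le> (B^2-A^2)*t" by linarith
  thus ?thesis unfolding A_def[symmetric] B_def[symmetric] by (simp add: algebra_simps)
qed

lemma hh_nonneg: "0 \<le> hh t" unfolding hh_def by simp

lemma zz_le: "zz t y \<le> y + hh t" "y - hh t \<le> zz t y"
  using hh_nonneg[of t] unfolding zz_def by auto

lemma ys_upper: assumes e: "0 < e" "e \<le> 1/4" and "t \<ge> 1" shows "ys e t \<le> 2/(e*sqrt (real t))"
  using assms(3)
proof (induction t rule: dec_induct)
  case base then show ?case using e by simp
next
  case (step t)
  define s where "s = sqrt (real t)"
  define s' where "s' = sqrt (real t + 1)"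
  have s0: "s \<ge> 1" "s' > 0" using step.hyps unfolding s_def s'_def by auto
  have r: "0 < rho e" "rho e < 1" using rho_bounds[OF e] by auto
  have yb: "0 \<le> ys e t" "ys e t \<le> 3/2" using ys_bnd[OF e step.hyps(1)] by auto
  have y1: "ys e (Suc t) = rho e * zz t (ys e t)" using step.hyps by simp
  have y1b: "ys e (Suc t) \<le> 3/2" using ys_bnd[OF e, of "Suc t"] by simp
  show ?case
  proof (cases "(real t+1)*e^2 \<le> 16/9")
    case True
    have "sqrt ((real t+1)*e^2) \<le> sqrt (16/9)" using True by (rule real_sqrt_le_mono)
    hence "s' * e \<le> 4/3" unfolding s'_def using e by (simp add: real_sqrt_mult real_sqrt_divide)
    hence "2/(e*s') \<ge> 3/2" using s0 e by (simp add: field_simps)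
    thus ?thesis using y1b unfolding s'_def by (simp add: add.commute)
  next
    case False
    have te: "real t * e \<ge> 6" using key_te[OF e] False by simp
    define A where "A = (1-2*e)*(2+e/2)"
    have A0: "A \<ge> 0" unfolding A_def using e by (intro mult_nonneg_nonneg) auto
    have "A^2 * (real t + 1) \<le> (2*(1-e))^2 * real t" unfolding A_def using key_sq[OF e te] by simp
    hence "sqrt (A^2 * (real t + 1)) \<le> sqrt ((2*(1-e))^2 * real t)" by (rule real_sqrt_le_mono)
    hence As: "A * s' \<le> 2*(1-e)*s" unfolding s_def s'_def using A0 e
      by (simp add: real_sqrt_mult)
    have "zz t (ys e t) \<le> 2/(e*s) + 1/(2*s)" using zz_le(1)[of t "ys e t"] step.IH
      unfolding hh_def s_def by simp
    hence "ys e (Suc t) \<le> rho e * (2/(e*s) + 1/(2*s))" using y1 r by (simp add: mult_left_mono)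
    also have "rho e * (2/(e*s) + 1/(2*s)) = A / ((1-e)*e*s)"
      unfolding rho_def A_def using e s0 by (simp add: field_simps)
    also have "A / ((1-e)*e*s) \<le> 2/(e*s')"
    proof -
      have "A * s' * e \<le> 2*(1-e)*s * e" using As e by (intro mult_right_mono) auto
      thus ?thesis using e s0 by (simp add: field_simps)
    qed
    finally show ?thesis unfolding s'_def by (simp add: add.commute)
  qed
qed

lemma rho_key: assumes e: "0 < e" "e \<le> 1/4" shows "rho e * (1 + 8*e) \<ge> 1"
proof -
  have "(1-2*e)*(1+8*e) \<ge> 1 - e" using e by (simp add: algebra_simps power2_eq_square)
  thus ?thesis unfolding rho_def using e by (simp add: field_simps)
qed

lemma ys_lower: assumes e: "0 < e" "e \<le> 1/4" and "t \<ge> 2"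
  shows "ys e t \<ge> min (1/(16*e*sqrt (real t))) (1/3)"
  using assms(3)
proof (induction t rule: dec_induct)
  case base
  have "ys e 2 = rho e * zz 1 0" by (simp add: numeral_2_eq_2)
  also have "zz 1 0 = 1/2" unfolding zz_def hh_def by simp
  finally show ?case using rho_bounds[OF e] by simp
next
  case (step t)
  define m where "m = min (1/(16*e*sqrt (real t))) (1/3)"
  have t1: "t \<ge> 1" using step.hyps by simp
  have r: "2/3 \<le> rho e" "0 < rho e" using rho_bounds[OF e] by auto
  have y1: "ys e (Suc t) = rho e * zz t (ys e t)" using step.hyps by simp
  have hb: "0 < hh t" "hh t \<le> 1/2" using hh_bnd[OF t1] by auto
  have mm: "m \<ge> min (1/(16*e*sqrt (real (Suc t)))) (1/3)"
  proof -
    have "1/(16*e*sqrt (real (Suc t))) \<le> 1/(16*e*sqrt (real t))"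
      using e t1 by (intro divide_left_mono mult_left_mono mult_pos_pos) auto
    thus ?thesis unfolding m_def by linarith
  qed
  show ?case
  proof (cases "ys e t < 1")
    case True
    have z: "zz t (ys e t) = ys e t + hh t" using True unfolding zz_def by simp
    have m0: "0 < m" unfolding m_def using e t1 by simp
    have "hh t = 8*e*(1/(16*e*sqrt (real t)))" unfolding hh_def using e by (simp add: field_simps)
    moreover have "8*e*m \<le> 8*e*(1/(16*e*sqrt (real t)))" unfolding m_def using e by (intro mult_left_mono) auto
    ultimately have "hh t \<ge> 8*e*m" by simp
    hence "zz t (ys e t) \<ge> m*(1+8*e)" using z step.IH unfolding m_def[symmetric] by (simp add: algebra_simps)
    hence "ys e (Suc t) \<ge> rho e * (m*(1+8*e))" using y1 r by (simp add: mult_left_mono)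
    moreover have "rho e * (m*(1+8*e)) \<ge> m" using mult_right_mono[OF rho_key[OF e], of m] m0
      by (simp add: algebra_simps)
    ultimately show ?thesis using mm by linarith
  next
    case False
    have z: "zz t (ys e t) \<ge> 1/2" using False hb unfolding zz_def by simp
    have "ys e (Suc t) \<ge> 2/3 * (1/2)" unfolding y1 using z r by (intro mult_mono) auto
    thus ?thesis by linarith
  qed
qed

lemma W_row: assumes "finite V" "i \<in> V"
  shows "(\<Sum>j\<in>V. W_mat V E e i j * p j) = p i + (\<Sum>j\<in>V-{i}. if E i j then e*(p j - p i) else 0)"
proof -
  have "(\<Sum>j\<in>V. W_mat V E e i j * p j) = W_mat V E e i i * p i + (\<Sum>j\<in>V-{i}. W_mat V E e i j * p j)"
    using assms by (simp add: sum.remove)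
  also have "(\<Sum>j\<in>V-{i}. W_mat V E e i j * p j) = (\<Sum>j\<in>V-{i}. (if E i j then e else 0) * p j)"
    by (rule sum.cong) (auto simp: W_mat_def)
  also have "W_mat V E e i i * p i = p i - (\<Sum>j\<in>V-{i}. (if E i j then e else 0) * p i)"
    by (simp add: W_mat_def sum_distrib_left right_diff_distrib mult.commute)
  finally have "(\<Sum>j\<in>V. W_mat V E e i j * p j) = p i + ((\<Sum>j\<in>V-{i}. (if E i j then e else 0) * p j) - (\<Sum>j\<in>V-{i}. (if E i j then e else 0) * p i))"
    by simp
  also have "(\<Sum>j\<in>V-{i}. (if E i j then e else 0) * p j) - (\<Sum>j\<in>V-{i}. (if E i j then e else 0) * p i)
     = (\<Sum>j\<in>V-{i}. if E i j then e*(p j - p i) else 0)"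
    by (simp add: sum_subtractf[symmetric] algebra_simps) (rule sum.cong, auto simp: algebra_simps)
  finally show ?thesis .
qed

lemma sum_split_n: "(\<Sum>i\<in>Gn_verts n. if i < n then A else B) = real n * A + real n * (B::real)"
proof -
  have "{..<2*n} = {..<n} \<union> {n..<2*n}" by auto
  hence "(\<Sum>i\<in>Gn_verts n. if i < n then A else B) = (\<Sum>i\<in>{..<n}. if i < n then A else B) + (\<Sum>i\<in>{n..<2*n}. if i < n then A else B)"
    unfolding Gn_verts_def by (metis (no_types, lifting) sum.union_disjoint finite_lessThan finite_atLeastLessThan ivl_disj_int_one(2))
  also have "\<dots> = real n * A + real n * B" by simp
  finally show ?thesis .
qed

lemma proj_id: "\<bar>v\<bar> \<le> a \<Longrightarrow> proj_box a v = v" unfolding proj_box_def by auto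

lemma main_fixed:
  fixes n :: nat and e :: real
  assumes n: "n \<ge> 4" and e: "0 < e" "e \<le> 1 / real n"
  shows "\<exists>g x. is_trajectory n 3 6 e g x \<and>
        (\<forall>y\<in>{-6..6}. y \<noteq> 0 \<longrightarrow> glob_F n 3 0 < glob_F n 3 y) \<and>
        (\<forall>t\<ge>1. \<forall>i<n. x t i = 0) \<and>
        (\<forall>t\<ge>1. \<forall>i<n. x t (n + i) - 0 \<ge> 0 \<and> x t (n + i) - 0 = x t n - 0) \<and>
        (\<exists>t1. \<forall>t\<ge>t1. \<forall>i<n. x t (n + i) - 0 \<ge> inverse e / (16 * sqrt (real t)))"
proof -
  have e4: "e \<le> 1/4"
  proof -
    have "1 / real n \<le> 1/4" using n by (simp add: field_simps)
    thus ?thesis using e by linarith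
  qed
  note E = e(1) e4
  define Z where "Z t = zz t (ys e t)" for t
  define c where "c t = - e * Z t / (1 - e)" for t
  define x where "x t i = (if i < n then 0 else ys e t)" for t i
  define g where "g t i = (if i < n then e * Z t * sqrt (real t) / (1 - e)
                          else (if ys e t < 1 then -1/2 else 1/2::real))" for t i
  have Zb: "0 \<le> Z t \<and> Z t \<le> 3/2" if "t \<ge> 1" for t
    unfolding Z_def using zz_bnd[OF that] ys_bnd[OF E that] by auto
  have cb: "\<bar>c t\<bar> \<le> 6" if "t \<ge> 1" for t
  proof -
    have "e / (1-e) \<le> 1" using E by (simp add: field_simps)
    hence "e / (1-e) * Z t \<le> 1 * (3/2)" using Zb[OF that] E by (intro mult_mono) auto
    moreover have "0 \<le> e / (1-e) * Z t" using Zb[OF that] E by auto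
    moreover have "c t = - (e / (1-e) * Z t)" unfolding c_def by simp
    ultimately show ?thesis by linarith
  qed
  have pj: "proj_box 6 (x t j - (1 / sqrt (real t)) * g t j) = (if j < n then c t else Z t)"
    if "t \<ge> 1" for t j
  proof (cases "j < n")
    case True
    have "x t j - (1 / sqrt (real t)) * g t j = c t"
      using True that E unfolding x_def g_def c_def by (simp add: field_simps)
    thus ?thesis using cb[OF that] True by (simp add: proj_id)
  next
    case False
    have "x t j - (1 / sqrt (real t)) * g t j = Z t"
      using False unfolding x_def g_def Z_def zz_def hh_def by auto
    thus ?thesis using Zb[OF that] False by (simp add: proj_id)
  qed
  have ecz: "c t * (1 - e) = - e * Z t" for t unfolding c_def using E by simp
  have traj: "is_trajectory n 3 6 e g x"
    unfolding is_trajectory_def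
  proof (intro conjI allI impI ballI)
    fix i assume "i \<in> Gn_verts n" thus "x 1 i = 0" unfolding x_def by simp
  next
    fix t i :: nat assume t: "t \<ge> 1" and i: "i \<in> Gn_verts n"
    show "is_subgradient (loc_f n 3 i) (x t i) (g t i)"
    proof (cases "i < n")
      case True
      have g0: "0 \<le> g t i" using True Zb[OF t] E unfolding g_def by auto
      have "e * Z t * sqrt (real t) \<le> e * (ys e t + hh t) * sqrt (real t)"
        using zz_le(1)[of t "ys e t"] E unfolding Z_def by (intro mult_right_mono mult_left_mono) auto
      also have "\<dots> = e * ys e t * sqrt (real t) + e/2" unfolding hh_def using t by (simp add: field_simps)
      also have "e * ys e t * sqrt (real t) \<le> 2"
        using ys_upper[OF E t] E t by (simp add: field_simps)
      finally have "e * Z t * sqrt (real t) \<le> 2 + 1/8" using E by linarith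
      hence "g t i \<le> 3" using True E unfolding g_def by (simp add: field_simps)
      hence "\<forall>y. 3 * \<bar>y\<bar> \<ge> g t i * y"
      proof (intro allI)
        fix y :: real assume g3: "g t i \<le> 3"
        have "g t i * y \<le> g t i * \<bar>y\<bar>" using g0 by (intro mult_left_mono) auto
        also have "\<dots> \<le> 3 * \<bar>y\<bar>" using g3 by (intro mult_right_mono) auto
        finally show "3 * \<bar>y\<bar> \<ge> g t i * y" .
      qed
      thus ?thesis using True unfolding is_subgradient_def loc_f_def x_def by simp
    next
      case False
      show ?thesis unfolding is_subgradient_def
      proof
        fix y :: real
        show "loc_f n 3 i y \<ge> loc_f n 3 i (x t i) + g t i * (y - x t i)"
        proof (cases "ys e t < 1")
          case True
          thus ?thesis using False unfolding loc_f_def x_def g_def by (auto simp: abs_if field_simps)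
        next
          case F2: False
          thus ?thesis using False unfolding loc_f_def x_def g_def by (auto simp: abs_if field_simps)
        qed
      qed
    qed
  next
    fix t i :: nat assume t: "t \<ge> 1" and i: "i \<in> Gn_verts n"
    have fin: "finite (Gn_verts n)" unfolding Gn_verts_def by simp
    let ?p = "\<lambda>j. if j < n then c t else Z t"
    have "(\<Sum>j\<in>Gn_verts n. W_mat (Gn_verts n) (Gn_edge n) e i j * proj_box 6 (x t j - (1 / sqrt (real t)) * g t j))
        = (\<Sum>j\<in>Gn_verts n. W_mat (Gn_verts n) (Gn_edge n) e i j * ?p j)"
      using pj[OF t] by simp
    also have "\<dots> = ?p i + (\<Sum>j\<in>Gn_verts n - {i}. if Gn_edge n i j then e*(?p j - ?p i) else 0)"
      by (rule W_row[OF fin i])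
    also have "\<dots> = x (t+1) i"
    proof (cases "i < n")
      case True
      have "(\<Sum>j\<in>Gn_verts n - {i}. if Gn_edge n i j then e*(?p j - ?p i) else 0)
          = (\<Sum>j\<in>Gn_verts n - {i}. if j = i + n then e*(Z t - c t) else 0)"
      proof (rule sum.cong[OF refl])
        fix j assume j: "j \<in> Gn_verts n - {i}"
        show "(if Gn_edge n i j then e*(?p j - ?p i) else 0) = (if j = i + n then e*(Z t - c t) else 0)"
        proof (cases "j < n")
          case True
          thus ?thesis using \<open>i < n\<close> by simp
        next
          case False
          have "Gn_edge n i j \<longleftrightarrow> j = i + n" using False \<open>i < n\<close> j unfolding Gn_edge_def Gn_verts_def by auto
          thus ?thesis using False \<open>i < n\<close> by simp
        qed
      qed
      also have "\<dots> = e*(Z t - c t)" using True n by (simp add: Gn_verts_def)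
      finally show ?thesis using True ecz[of t] unfolding x_def by (simp add: algebra_simps)
    next
      case False
      obtain k where k: "i = n + k" "k < n" using False i unfolding Gn_verts_def
        by (metis add_diff_inverse_nat lessThan_iff mult_2 nat_add_left_cancel_less)
      have "(\<Sum>j\<in>Gn_verts n - {i}. if Gn_edge n i j then e*(?p j - ?p i) else 0)
          = (\<Sum>j\<in>Gn_verts n - {i}. if j = k then e*(c t - Z t) else 0)"
      proof (rule sum.cong[OF refl])
        fix j assume j: "j \<in> Gn_verts n - {i}"
        show "(if Gn_edge n i j then e*(?p j - ?p i) else 0) = (if j = k then e*(c t - Z t) else 0)"
        proof (cases "j < n")
          case False
          thus ?thesis using k by simp
        next
          case True
          have "Gn_edge n i j \<longleftrightarrow> j = k" using True k j unfolding Gn_edge_def Gn_verts_def by auto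
          thus ?thesis using True k by simp
        qed
      qed
      also have "\<dots> = e*(c t - Z t)" using k by (simp add: Gn_verts_def)
      finally have "?p i + (\<Sum>j\<in>Gn_verts n - {i}. if Gn_edge n i j then e*(?p j - ?p i) else 0)
           = Z t + e * (c t - Z t)" using False by simp
      also have "\<dots> = rho e * Z t"
      proof -
        have ne: "1 - e \<noteq> 0" using E by simp
        show ?thesis unfolding c_def rho_def using ne
          by (simp add: field_simps)
      qed
      also have "\<dots> = x (t+1) i" using False t unfolding x_def Z_def by simp
      finally show ?thesis .
    qed
    finally show "x (t + 1) i = (\<Sum>j\<in>Gn_verts n. W_mat (Gn_verts n) (Gn_edge n) e i j *
                          proj_box 6 (x t j - (1 / sqrt (real t)) * g t j))" by simp
  qed
  have optF: "\<forall>y\<in>{-6..6}. y \<noteq> 0 \<longrightarrow> glob_F n 3 0 < glob_F n 3 y"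
  proof (intro ballI impI)
    fix y :: real assume "y \<noteq> 0"
    have F: "glob_F n 3 z = (3*\<bar>z\<bar> + (1/2)*\<bar>z-1\<bar>) / 2" for z
    proof -
      have "glob_F n 3 z = (1 / (2 * real n)) * (real n * (3*\<bar>z\<bar>) + real n * ((1/2)*\<bar>z-1\<bar>))"
        unfolding glob_F_def loc_f_def using sum_split_n[of n "3*\<bar>z\<bar>" "(1/2)*\<bar>z-1\<bar>"] by simp
      also have "\<dots> = (3*\<bar>z\<bar> + (1/2)*\<bar>z-1\<bar>) / 2" using n by (simp add: field_simps)
      finally show ?thesis .
    qed
    have "3*\<bar>0::real\<bar> + (1/2)*\<bar>0-1\<bar> < 3*\<bar>y\<bar> + (1/2)*\<bar>y-1\<bar>" using \<open>y \<noteq> 0\<close> by (simp add: abs_if)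
    thus "glob_F n 3 0 < glob_F n 3 y" unfolding F by (simp only: divide_strict_right_mono)
  qed
  have low: "\<exists>t1. \<forall>t\<ge>t1. \<forall>i<n. x t (n + i) - 0 \<ge> inverse e / (16 * sqrt (real t))"
  proof (intro exI allI impI)
    fix t i :: nat assume t: "nat \<lceil>1/e^2\<rceil> + 2 \<le> t"
    have t2: "t \<ge> 2" using t by simp
    have "real t \<ge> 1/e^2" using t by linarith
    hence "sqrt (real t) \<ge> sqrt (1/e^2)" by (rule real_sqrt_le_mono)
    hence st: "sqrt (real t) \<ge> 1/e" using E by (simp add: real_sqrt_divide)
    have "1/(16*e*sqrt (real t)) \<le> 1/3"
    proof -
      have "16*e*sqrt (real t) \<ge> 16*e*(1/e)" using st E by (intro mult_left_mono) auto
      hence "16*e*sqrt (real t) \<ge> 16" using E by simp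
      thus ?thesis by (simp add: field_simps)
    qed
    hence "ys e t \<ge> 1/(16*e*sqrt (real t))" using ys_lower[OF E t2] by linarith
    thus "x t (n + i) - 0 \<ge> inverse e / (16 * sqrt (real t))" unfolding x_def
      by (simp add: field_simps)
  qed
  show ?thesis
  proof (rule exI[of _ g], rule exI[of _ x], intro conjI traj optF low allI impI)
    fix t i :: nat assume "t \<ge> 1" "i < n"
    thus "x t i = 0" unfolding x_def by simp
  next
    fix t i :: nat assume t: "t \<ge> 1" and "i < n"
    thus "x t (n + i) - 0 \<ge> 0" unfolding x_def using ys_bnd[OF E t] by simp
  next
    fix t i :: nat assume t: "t \<ge> 1" and "i < n"
    show "x t (n + i) - 0 = x t n - 0" unfolding x_def by simp
  qed
qed


theorem theorem2:
  shows "\<exists>\<gamma>::real. \<exists>a::real. \<gamma> > 1 \<and> a > 0 \<and>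
    (\<forall>n::nat. \<forall>eps::real. n \<ge> 4 \<and> 0 < eps \<and> eps \<le> 1 / real n \<longrightarrow>
      (\<exists>g x. is_trajectory n \<gamma> a eps g x \<and>
        (\<forall>y\<in>{-a..a}. y \<noteq> 0 \<longrightarrow> glob_F n \<gamma> 0 < glob_F n \<gamma> y) \<and>
        (\<forall>t\<ge>1. \<forall>i<n. x t i = 0) \<and>
        (\<forall>t\<ge>1. \<forall>i<n. x t (n + i) - 0 \<ge> 0 \<and> x t (n + i) - 0 = x t n - 0) \<and>
        (\<exists>t1. \<forall>t\<ge>t1. \<forall>i<n. x t (n + i) - 0 \<ge> inverse eps / (16 * sqrt (real t)))))"
proof (rule exI[of _ 3], rule exI[of _ 6], intro conjI allI impI)
  fix n :: nat and eps :: real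
  assume "4 \<le> n \<and> 0 < eps \<and> eps \<le> 1 / real n"
  thus "\<exists>g x. is_trajectory n 3 6 eps g x \<and>
        (\<forall>y\<in>{-6..6}. y \<noteq> 0 \<longrightarrow> glob_F n 3 0 < glob_F n 3 y) \<and>
        (\<forall>t\<ge>1. \<forall>i<n. x t i = 0) \<and>
        (\<forall>t\<ge>1. \<forall>i<n. x t (n + i) - 0 \<ge> 0 \<and> x t (n + i) - 0 = x t n - 0) \<and>
        (\<exists>t1. \<forall>t\<ge>t1. \<forall>i<n. x t (n + i) - 0 \<ge> inverse eps / (16 * sqrt (real t)))"
    using main_fixed by blast
qed (auto)

end
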